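(* Let $C\subseteq\mathbb{F}_q^n$ be an $[n,k]$ linear code with $n-k\ge2$ and parity-check matrix $H\in\mathbb{F}_q^{(n-k)\times n}$ of rank $n-k$. Let $u\ge1$ satisfy $\frac{n-k-1}{q^u-1}<1$, and let $p\in\left(\frac{n-k-1}{q^u-1},1\right)$. Put $m=\lceil (n-k-1)/p\rceil$. Then $n-k\le m\le q^u-1$, there exists an MDS code with parameters $[m,n-k,m-(n-k)+1]$ over $\mathbb{F}_{q^u}$, and if $\bar G\in\mathbb{F}_{q^u}^{(n-k)\times m}$ is a generator matrix of any such code, then the list $S$ of the $m$ rows of $\bar G^TH$ is a test set for $C$ with designed probability $\frac{n-k-1}{m}\le p$; in particular $S$ is a test set for $C$ with designed probability $p$.
   Context: $\mathbb{F}_{q^u}$ is the degree-$u$ extension of $\mathbb{F}_q$; $(\mathbf{x},\mathbf{y})=\sum_{j=1}^n x_jy_j$. A test set with designed probability $p\in(0,1)$ for $C$ is a finite nonempty collection $S$ of vectors in $\mathbb{F}_{q^u}^n$ (counted with multiplicity) such that for every $\mathbf{x}\in\mathbb{F}_q^n$: (1) $\mathbf{x}\in C$ iff $(\mathbf{x},\mathbf{y})=0$ for all $\mathbf{y}\in S$; (2) if some $\mathbf{y}\in S$ has $(\mathbf{x},\mathbf{y})\ne0$, then $\#\{\mathbf{y}\in S:(\mathbf{x},\mathbf{y})\ne0\}\ge(1-p)\#S$. *)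

theory Defs
  imports "Jordan_Normal_Form.DL_Rank"
begin

text \<open>The field F_q is a finite field type 'a; the extension F_(q^u) is a finite field
  type 'b with CARD('b) = CARD('a)^u together with a field embedding phi.\<close>

definition pairing :: "('a \<Rightarrow> 'b::comm_ring_1) \<Rightarrow> 'a vec \<Rightarrow> 'b vec \<Rightarrow> 'b" where
  "pairing phi x y = (\<Sum>j<dim_vec x. phi (x $ j) * y $ j)"

definition code_of_parity_check :: "'a::field mat \<Rightarrow> 'a vec set" where
  "code_of_parity_check H = {x \<in> carrier_vec (dim_col H). H *\<^sub>v x = 0\<^sub>v (dim_row H)}"

definition code_of_generator :: "'b::field mat \<Rightarrow> 'b vec set" where
  "code_of_generator G = {w. \<exists>c \<in> carrier_vec (dim_row G). w = transpose_mat G *\<^sub>v c}"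

definition hamming_weight :: "'b::zero vec \<Rightarrow> nat" where
  "hamming_weight c = card {i. i < dim_vec c \<and> c $ i \<noteq> 0}"

definition min_distance :: "nat \<Rightarrow> 'b::zero vec set \<Rightarrow> nat" where
  "min_distance m D = Inf (hamming_weight ` (D - {0\<^sub>v m}))"

definition is_generator_matrix :: "'b::{field} mat \<Rightarrow> nat \<Rightarrow> nat \<Rightarrow> nat \<Rightarrow> bool" where
  "is_generator_matrix G m r d \<longleftrightarrow>
     G \<in> carrier_mat r m \<and> vec_space.rank r G = r \<and>
     min_distance m (code_of_generator G) = d"

text \<open>Test set with designed probability p for the code C of length n (S a list, i.e.
  counted with multiplicity).\<close>
definition is_test_set :: "('a \<Rightarrow> 'b::comm_ring_1) \<Rightarrow> nat \<Rightarrow> 'a vec set \<Rightarrow> 'b vec list \<Rightarrow> real \<Rightarrow> bool" where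
  "is_test_set phi n C S p \<longleftrightarrow>
     S \<noteq> [] \<and> set S \<subseteq> carrier_vec n \<and>
     (\<forall>x \<in> carrier_vec n.
        (x \<in> C \<longleftrightarrow> (\<forall>y \<in> set S. pairing phi x y = 0)) \<and>
        ((\<exists>y \<in> set S. pairing phi x y \<noteq> 0) \<longrightarrow>
           real (length (filter (\<lambda>y. pairing phi x y \<noteq> 0) S)) \<ge> (1 - p) * real (length S)))"

end

theory Submission
  imports Defs "HOL-Computational_Algebra.Polynomial"
begin

lemma (in vec_space) full_rank_kernel:
  assumes G: "G \<in> carrier_mat n m" and rk: "rank G = n" and w: "w \<in> carrier_vec n"
    and z: "\<And>c. c \<in> set (cols G) \<Longrightarrow> w \<bullet> c = 0"
  shows "w = 0\<^sub>v n"
proof -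
  obtain S where S: "maximal S (\<lambda>T. T \<subseteq> set (cols G) \<and> lin_indpt T)"
    using maximal_exists[of "(\<lambda>T. T \<subseteq> set (cols G) \<and> lin_indpt T)" "card (set (cols G))" "{}"]
    by (meson List.finite_set card_mono empty_iff empty_subsetI finite_lin_indpt2 rev_finite_subset)
  have cS: "card S = n" using rank_card_indpt[OF G S] rk by simp
  have Ssub: "S \<subseteq> set (cols G)" and li: "lin_indpt S" using S unfolding maximal_def by auto
  have colsC: "set (cols G) \<subseteq> carrier_vec n" using G cols_dim by blast
  have fS: "finite S" using Ssub finite_subset by blast
  have "basis S"
    by (rule dim_li_is_basis) (use fS Ssub colsC li cS dim_is_n in auto)
  then have sp: "span S = carrier_vec n" unfolding basis_def by auto
  show ?thesis
  proof (rule eq_vecI)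
    show "dim_vec w = dim_vec (0\<^sub>v n)" using w by simp
    fix j assume "j < dim_vec (0\<^sub>v n)"
    then have j: "j < n" by simp
    have "unit_vec n j \<in> span S" using sp j by simp
    then obtain a A where A: "unit_vec n j = lincomb a A" "finite A" "A \<subseteq> S"
      using in_spanE by blast
    have AC: "A \<subseteq> carrier_vec n" using A(3) Ssub colsC by blast
    have "w $ j = unit_vec n j \<bullet> w" using w j by simp
    also have "\<dots> = (\<Sum>u\<in>A. (a u \<cdot>\<^sub>v u) \<bullet> w)"
      unfolding A(1) lincomb_def
      by (rule finsum_scalar_prod_sum) (use AC w in auto)
    also have "\<dots> = 0"
    proof (rule sum.neutral, intro ballI)
      fix u assume u: "u \<in> A"
      have "(a u \<cdot>\<^sub>v u) \<bullet> w = a u * (u \<bullet> w)" using u AC w by (auto intro: smult_scalar_prod_distrib)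
      also have "u \<bullet> w = w \<bullet> u" using u AC w comm_scalar_prod by blast
      also have "\<dots> = 0" using z u A(3) Ssub by blast
      finally show "(a u \<cdot>\<^sub>v u) \<bullet> w = 0" by simp
    qed
    finally show "w $ j = 0\<^sub>v n $ j" using j by simp
  qed
qed


lemma (in vec_space) rank_le_nr:
  assumes G: "G \<in> carrier_mat n m"
  shows "rank G \<le> n"
proof -
  obtain S where S: "maximal S (\<lambda>T. T \<subseteq> set (cols G) \<and> lin_indpt T)"
    using maximal_exists[of "(\<lambda>T. T \<subseteq> set (cols G) \<and> lin_indpt T)" "card (set (cols G))" "{}"]
    by (meson List.finite_set card_mono empty_iff empty_subsetI finite_lin_indpt2 rev_finite_subset)
  have Ssub: "S \<subseteq> set (cols G)" and li: "lin_indpt S" using S unfolding maximal_def by auto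
  have colsC: "set (cols G) \<subseteq> carrier_vec n" using G cols_dim by blast
  have "card S \<le> dim" using li_le_dim(2)[OF fin_dim _ li] Ssub colsC by auto
  then show ?thesis using rank_card_indpt[OF G S] dim_is_n by simp
qed

lemma vec_poly_roots:
  fixes c :: "'b::field vec"
  assumes c: "c \<in> carrier_vec r" and c0: "c \<noteq> 0\<^sub>v r"
  shows "finite {x. (\<Sum>j<r. c$j * x^j) = 0} \<and> card {x. (\<Sum>j<r. c$j * x^j) = 0} \<le> r - 1"
proof -
  define P where "P = (\<Sum>j<r. monom (c$j) j)"
  have ev: "poly P x = (\<Sum>j<r. c$j * x^j)" for x
    unfolding P_def poly_sum poly_monom by simp
  have co: "coeff P i = (if i < r then c$i else 0)" for i
    unfolding P_def coeff_sum by (simp add: coeff_monom)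
  obtain i where i: "i < r" "c $ i \<noteq> 0" using c c0 by (metis carrier_vecD eq_vecI index_zero_vec(1) index_zero_vec(2))
  have P0: "P \<noteq> 0" using co[of i] i by auto
  have "degree P \<le> r - 1" by (rule degree_le) (auto simp: co)
  moreover have "card {x. poly P x = 0} \<le> degree P" by (rule card_poly_roots_bound) (use P0 in auto)
  moreover have "finite {x. poly P x = 0}" using poly_roots_finite[OF P0] .
  ultimately show ?thesis unfolding ev by simp
qed

lemma GT_index:
  fixes c :: "'b::field vec"
  assumes c: "c \<in> carrier_vec r" and i: "i < m"
  shows "(transpose_mat (mat r m (\<lambda>(j,i). a i ^ j)) *\<^sub>v c) $ i = (\<Sum>j<r. c$j * (a i)^j)"
  using c i by (auto simp: scalar_prod_def lessThan_atLeast0 intro!: sum.cong)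


lemma RS_rank:
  fixes a :: "nat \<Rightarrow> 'b::field"
  assumes inj: "inj_on a {..<m}" and r: "1 \<le> r" "r \<le> m"
  shows "vec_space.rank r (mat r m (\<lambda>(j,i). a i ^ j)) = r"
proof -
  let ?G = "mat r m (\<lambda>(j,i). a i ^ j)"
  define A where "A = mat r r (\<lambda>(j,i). (a i ^ j :: 'b))"
  have A: "A \<in> carrier_mat r r" unfolding A_def by simp
  have G: "?G \<in> carrier_mat r m" by simp
  have detT: "det (transpose_mat A) \<noteq> 0"
  proof
    assume "det (transpose_mat A) = 0"
    moreover have AT: "transpose_mat A \<in> carrier_mat r r" using A by simp
    ultimately obtain v where v: "v \<in> carrier_vec r" "v \<noteq> 0\<^sub>v r" "transpose_mat A *\<^sub>v v = 0\<^sub>v r"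
      using det_0_iff_vec_prod_zero_field[OF AT] by blast
    have z: "(\<Sum>j<r. v$j * (a i)^j) = 0" if i: "i < r" for i
    proof -
      have "(transpose_mat A *\<^sub>v v) $ i = 0" using v(3) i by simp
      moreover have "(transpose_mat A *\<^sub>v v) $ i = (\<Sum>j<r. v$j * (a i)^j)"
        unfolding A_def by (rule GT_index[OF v(1) i])
      ultimately show ?thesis by simp
    qed
    have "a ` {..<r} \<subseteq> {x. (\<Sum>j<r. v$j * x^j) = 0}" using z by auto
    moreover have "card (a ` {..<r}) = r"
    proof -
      have "inj_on a {..<r}" by (rule inj_on_subset[OF inj]) (use r in auto)
      then show ?thesis by (simp add: card_image)
    qed
    ultimately have "r \<le> card {x. (\<Sum>j<r. v$j * x^j) = 0}"
      using card_mono[of "{x. (\<Sum>j<r. v$j * x^j) = 0}" "a ` {..<r}"] vec_poly_roots[OF v(1) v(2)] by simp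
    then have "r \<le> r - 1" using vec_poly_roots[OF v(1) v(2)] by linarith
    then show False using r by simp
  qed
  have detA: "det A \<noteq> 0" using detT det_transpose[OF A] by simp
  have rkA: "vec_space.rank r A = r" using vec_space.low_rank_det_zero[OF A detA] .
  have dist: "distinct (cols A)"
  proof (rule ccontr)
    assume "\<not> distinct (cols A)"
    then obtain i j where "i\<noteq>j" "(cols A) ! i = (cols A) ! j" "i<length (cols A)" "j<length (cols A)"
      using distinct_conv_nth by blast
    then have "col A i = col A j" "i<r" "j<r" using A by auto
    then have "det A = 0" using det_identical_cols \<open>i \<noteq> j\<close> A by blast
    then show False using detA by auto
  qed
  have sub: "set (cols A) \<subseteq> set (cols ?G)"
  proof
    fix c assume "c \<in> set (cols A)"
    then obtain i where i: "i < r" "c = col A i" using A by (auto simp: in_set_conv_nth)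
    then have "c = col ?G i" using r by (intro eq_vecI) (simp_all add: A_def)
    then show "c \<in> set (cols ?G)" using i r by (simp add: cols_def)
  qed
  have "card (set (cols A)) \<le> vec_space.rank r ?G"
    using vec_space.rank_ge_card_indpt[OF G sub vec_space.full_rank_lin_indpt[OF A rkA dist]] .
  moreover have "card (set (cols A)) = r" using distinct_card[OF dist] A by simp
  moreover have "vec_space.rank r ?G \<le> r" using vec_space.rank_le_nr[OF G] .
  ultimately show ?thesis by simp
qed


lemma RS_min_dist:
  fixes a :: "nat \<Rightarrow> 'b::field"
  assumes inj: "inj_on a {..<m}" and r: "1 \<le> r" "r \<le> m"
  shows "min_distance m (code_of_generator (mat r m (\<lambda>(j,i). a i ^ j))) = m - r + 1"
proof -
  let ?G = "mat r m (\<lambda>(j,i). a i ^ j)"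
  let ?D = "code_of_generator ?G"
  have lower: "m - r + 1 \<le> hamming_weight w" if w: "w \<in> ?D - {0\<^sub>v m}" for w
  proof -
    obtain c where c: "c \<in> carrier_vec r" "w = transpose_mat ?G *\<^sub>v c"
      using w unfolding code_of_generator_def by auto
    have dw: "dim_vec w = m" using c by simp
    have wi: "w $ i = (\<Sum>j<r. c$j * (a i)^j)" if "i < m" for i
      using GT_index[OF c(1) that] c(2) by simp
    have c0: "c \<noteq> 0\<^sub>v r"
    proof
      assume "c = 0\<^sub>v r"
      then have "w = 0\<^sub>v m" using dw wi c(1) by (intro eq_vecI) auto
      then show False using w by simp
    qed
    define Z where "Z = {i. i < m \<and> w $ i = 0}"
    have "a ` Z \<subseteq> {x. (\<Sum>j<r. c$j * x^j) = 0}" using wi unfolding Z_def by auto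
    then have "card (a ` Z) \<le> r - 1"
      using vec_poly_roots[OF c(1) c0] card_mono order_trans by metis
    moreover have "card (a ` Z) = card Z"
      by (rule card_image, rule inj_on_subset[OF inj]) (auto simp: Z_def)
    ultimately have cZ: "card Z \<le> r - 1" by simp
    have "{i. i < dim_vec w \<and> w $ i \<noteq> 0} = {..<m} - Z" unfolding Z_def dw by auto
    then have "hamming_weight w = m - card Z"
      unfolding hamming_weight_def by (simp add: card_Diff_subset Z_def subset_eq)
    then show ?thesis using cZ r by simp
  qed
  define Q where "Q = (\<Prod>l<r-1. [:- a l, 1:])"
  have degQ: "degree Q \<le> r - 1"
  proof -
    have "degree Q \<le> sum (degree \<circ> (\<lambda>l. [:- a l, 1:])) {..<r-1}"
      unfolding Q_def by (rule degree_prod_sum_le) simp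
    then show ?thesis by simp
  qed
  have polyQ: "poly Q x = (\<Sum>j<r. coeff Q j * x^j)" for x
  proof -
    have "poly Q x = (\<Sum>j\<le>degree Q. coeff Q j * x^j)" by (rule poly_altdef)
    also have "\<dots> = (\<Sum>j<r. coeff Q j * x^j)"
      by (rule sum.mono_neutral_left) (use degQ r in \<open>auto simp: coeff_eq_0\<close>)
    finally show ?thesis .
  qed
  define c0 where "c0 = vec r (coeff Q)"
  define w0 where "w0 = transpose_mat ?G *\<^sub>v c0"
  have c0C: "c0 \<in> carrier_vec r" unfolding c0_def by simp
  have dw0: "dim_vec w0 = m" unfolding w0_def by simp
  have w0i: "w0 $ i = (\<Prod>l<r-1. a i - a l)" if i: "i < m" for i
  proof -
    have "w0 $ i = (\<Sum>j<r. c0$j * (a i)^j)" unfolding w0_def using GT_index[OF c0C i] .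
    also have "\<dots> = (\<Sum>j<r. coeff Q j * (a i)^j)" unfolding c0_def by simp
    also have "\<dots> = poly Q (a i)" using polyQ by simp
    also have "\<dots> = (\<Prod>l<r-1. a i - a l)" unfolding Q_def poly_prod by simp
    finally show ?thesis .
  qed
  have w0z: "w0 $ i = 0 \<longleftrightarrow> i < r - 1" if i: "i < m" for i
  proof -
    have "w0 $ i = 0 \<longleftrightarrow> (\<exists>l<r-1. a i = a l)" using w0i[OF i] by (simp add: Bex_def)
    also have "\<dots> \<longleftrightarrow> i < r - 1"
    proof
      assume "\<exists>l<r-1. a i = a l"
      then obtain l where l: "l < r - 1" "a i = a l" by blast
      then have "i = l" using inj i r unfolding inj_on_def by auto
      then show "i < r - 1" using l by simp
    qed auto
    finally show ?thesis .
  qed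
  have supp: "{i. i < dim_vec w0 \<and> w0 $ i \<noteq> 0} = {r-1..<m}" using w0z dw0 by auto
  have hw0: "hamming_weight w0 = m - r + 1" unfolding hamming_weight_def supp using r by simp
  have w0D: "w0 \<in> ?D - {0\<^sub>v m}"
  proof
    show "w0 \<in> ?D" unfolding code_of_generator_def w0_def using c0C by auto
    have "w0 $ (r - 1) \<noteq> 0" using w0z[of "r-1"] r by simp
    then show "w0 \<notin> {0\<^sub>v m}" using r by auto
  qed
  have mem: "m - r + 1 \<in> hamming_weight ` (?D - {0\<^sub>v m})" using hw0 w0D by (metis image_eqI)
  show ?thesis unfolding min_distance_def
    by (rule cInf_eq_minimum[OF mem]) (use lower in auto)
qed


lemma test_set_lemma:
  fixes phi :: "'a::field \<Rightarrow> 'b::field" and G :: "'b mat" and H :: "'a mat"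
  assumes ext: "field_hom phi" and H: "H \<in> carrier_mat r n" and G: "G \<in> carrier_mat r m"
    and rk: "vec_space.rank r G = r" and md: "min_distance m (code_of_generator G) = d"
    and m0: "0 < m" and pb: "(1 - p') * real m \<le> real d"
  shows "is_test_set phi n (code_of_parity_check H) (rows (transpose_mat G * map_mat phi H)) p'"
proof -
  interpret field_hom phi by (rule ext)
  define M where "M = transpose_mat G * map_mat phi H"
  have M: "M \<in> carrier_mat m n" unfolding M_def using G H by auto
  have lenS: "length (rows M) = m" using M by simp
  have nthS: "rows M ! i = row M i" if "i < m" for i using that M by simp
  have setS: "set (rows M) = {row M i | i. i < m}" using M by (auto simp: rows_def)
  have key: "pairing phi x (row M i) = (transpose_mat G *\<^sub>v map_vec phi (H *\<^sub>v x)) $ i"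
    if x: "x \<in> carrier_vec n" and i: "i < m" for x i
  proof -
    have vx: "map_vec phi x \<in> carrier_vec n" using x by simp
    have dx: "dim_vec x = n" using x by simp
    have "row M i \<bullet> map_vec phi x = (\<Sum>j<n. row M i $ j * map_vec phi x $ j)"
      using dx by (simp add: scalar_prod_def atLeast0LessThan)
    also have "\<dots> = (\<Sum>j<n. phi (x $ j) * row M i $ j)"
      by (intro sum.cong refl) (simp add: dx mult.commute)
    finally have "pairing phi x (row M i) = row M i \<bullet> map_vec phi x"
      unfolding pairing_def dx by simp
    also have "\<dots> = (M *\<^sub>v map_vec phi x) $ i" using M i by simp
    also have "M *\<^sub>v map_vec phi x = transpose_mat G *\<^sub>v (map_mat phi H *\<^sub>v map_vec phi x)"
      unfolding M_def by (rule assoc_mult_mat_vec[of _ m r _ n]) (use G H vx in auto)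
    also have "map_mat phi H *\<^sub>v map_vec phi x = map_vec phi (H *\<^sub>v x)"
      using mult_mat_vec_hom[OF H x] by simp
    finally show ?thesis .
  qed
  show ?thesis unfolding is_test_set_def M_def[symmetric]
  proof (intro conjI ballI impI)
    show "rows M \<noteq> []"
    proof
      assume "rows M = []"
      then have "length (rows M) = 0" by (simp only: list.size)
      with lenS m0 show False by linarith
    qed
    show "set (rows M) \<subseteq> carrier_vec n"
    proof
      fix y assume "y \<in> set (rows M)"
      then obtain i where i: "i < m" "y = row M i" using setS by blast
      show "y \<in> carrier_vec n" unfolding i(2) using row_carrier[of M i] M by (metis carrier_matD(2))
    qed
  next
    fix x :: "'a vec" assume x: "x \<in> carrier_vec n"
    define w where "w = map_vec phi (H *\<^sub>v x)"
    have wC: "w \<in> carrier_vec r" unfolding w_def using mult_mat_vec_carrier[OF H x] by (rule map_carrier_vec[THEN iffD2])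
    have keyw: "pairing phi x (row M i) = (transpose_mat G *\<^sub>v w) $ i" if i: "i < m" for i
      unfolding w_def by (rule key[OF x i])
    have dGw: "dim_vec (transpose_mat G *\<^sub>v w) = m" using G by (metis carrier_matD(2) dim_mult_mat_vec index_transpose_mat(2))
    have allz: "(\<forall>y\<in>set (rows M). pairing phi x y = 0) \<longleftrightarrow> transpose_mat G *\<^sub>v w = 0\<^sub>v m"
    proof
      assume A: "\<forall>y\<in>set (rows M). pairing phi x y = 0"
      have "(transpose_mat G *\<^sub>v w) $ i = 0" if i: "i < m" for i
      proof -
        have "row M i \<in> set (rows M)" using setS i by blast
        with A have "pairing phi x (row M i) = 0" by blast
        then show ?thesis using keyw[OF i] by simp
      qed
      then show "transpose_mat G *\<^sub>v w = 0\<^sub>v m" using dGw by (intro eq_vecI) auto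
    next
      assume z: "transpose_mat G *\<^sub>v w = 0\<^sub>v m"
      show "\<forall>y\<in>set (rows M). pairing phi x y = 0"
      proof
        fix y assume "y \<in> set (rows M)"
        then obtain i where i: "i < m" "y = row M i" using setS by blast
        show "pairing phi x y = 0" unfolding i(2) keyw[OF i(1)] z using i(1) by simp
      qed
    qed
    have kern: "transpose_mat G *\<^sub>v w = 0\<^sub>v m \<longleftrightarrow> w = 0\<^sub>v r"
    proof
      assume z: "transpose_mat G *\<^sub>v w = 0\<^sub>v m"
      show "w = 0\<^sub>v r"
      proof (rule vec_space.full_rank_kernel[OF G rk wC])
        fix c assume "c \<in> set (cols G)"
        then obtain i where i: "i < m" "c = col G i" using G by (auto simp: in_set_conv_nth)
        have "w \<bullet> c = c \<bullet> w" using comm_scalar_prod[OF wC] i G by auto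
        also have "\<dots> = (transpose_mat G *\<^sub>v w) $ i" using i G by simp
        finally show "w \<bullet> c = 0" using z i by simp
      qed
    next
      assume "w = 0\<^sub>v r"
      then show "transpose_mat G *\<^sub>v w = 0\<^sub>v m" using G by (intro eq_vecI) auto
    qed
    have wz: "w = 0\<^sub>v r \<longleftrightarrow> H *\<^sub>v x = 0\<^sub>v r"
    proof
      assume "w = 0\<^sub>v r"
      then have "\<And>i. i < r \<Longrightarrow> phi ((H *\<^sub>v x) $ i) = 0" unfolding w_def
        by (metis H carrier_matD(1) dim_mult_mat_vec index_map_vec(1) index_zero_vec(1))
      then show "H *\<^sub>v x = 0\<^sub>v r" using H by (intro eq_vecI) auto
    next
      assume "H *\<^sub>v x = 0\<^sub>v r"
      then show "w = 0\<^sub>v r" unfolding w_def by (intro eq_vecI) auto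
    qed
    have inC: "x \<in> code_of_parity_check H \<longleftrightarrow> H *\<^sub>v x = 0\<^sub>v r"
      unfolding code_of_parity_check_def using x H by auto
    show "(x \<in> code_of_parity_check H) = (\<forall>y\<in>set (rows M). pairing phi x y = 0)"
      using inC wz kern allz by simp
    assume ex: "\<exists>y\<in>set (rows M). pairing phi x y \<noteq> 0"
    then have nz: "transpose_mat G *\<^sub>v w \<noteq> 0\<^sub>v m" using allz by blast
    have inD: "transpose_mat G *\<^sub>v w \<in> code_of_generator G - {0\<^sub>v m}"
      using nz wC G unfolding code_of_generator_def by auto
    have "d \<le> hamming_weight (transpose_mat G *\<^sub>v w)"
      unfolding md[symmetric] min_distance_def
      by (rule cInf_lower) (use inD in auto)
    moreover have "length (filter (\<lambda>y. pairing phi x y \<noteq> 0) (rows M)) = hamming_weight (transpose_mat G *\<^sub>v w)"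
    proof -
      have "length (filter (\<lambda>y. pairing phi x y \<noteq> 0) (rows M))
          = card {i. i < m \<and> pairing phi x (rows M ! i) \<noteq> 0}"
        unfolding length_filter_conv_card lenS ..
      also have "{i. i < m \<and> pairing phi x (rows M ! i) \<noteq> 0}
          = {i. i < dim_vec (transpose_mat G *\<^sub>v w) \<and> (transpose_mat G *\<^sub>v w) $ i \<noteq> 0}"
      proof (rule Collect_cong)
        fix i
        show "(i < m \<and> pairing phi x (rows M ! i) \<noteq> 0) =
          (i < dim_vec (transpose_mat G *\<^sub>v w) \<and> (transpose_mat G *\<^sub>v w) $ i \<noteq> 0)"
        proof (cases "i < m")
          case True
          then show ?thesis using keyw[OF True] nthS[OF True] dGw by simp
        next
          case False
          then show ?thesis using dGw by simp
        qed
      qed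
      finally show ?thesis unfolding hamming_weight_def .
    qed
    ultimately show "(1 - p') * real (length (rows M)) \<le> real (length (filter (\<lambda>y. pairing phi x y \<noteq> 0) (rows M)))"
      using pb lenS by simp
  qed
qed


theorem mainTheorem4:
  fixes phi :: "'a::{finite,field} \<Rightarrow> 'b::{finite,field}"
    and n k u :: nat and H :: "'a mat" and p :: real
  assumes ext: "field_hom phi" and card_ext: "card (UNIV :: 'b set) = card (UNIV :: 'a set) ^ u"
    and u: "u \<ge> 1"
    and nk: "k + 2 \<le> n"
    and H: "H \<in> carrier_mat (n - k) n" and rankH: "vec_space.rank (n - k) H = n - k"
    and ratio: "real (n - k - 1) / (real (card (UNIV :: 'a set) ^ u) - 1) < 1"
    and p_lo: "real (n - k - 1) / (real (card (UNIV :: 'a set) ^ u) - 1) < p" and p_hi: "p < 1"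
  shows "let m = nat \<lceil>real (n - k - 1) / p\<rceil>; C = code_of_parity_check H in
     n - k \<le> m \<and> m \<le> card (UNIV :: 'a set) ^ u - 1 \<and>
     (\<exists>G :: 'b mat. is_generator_matrix G m (n - k) (m - (n - k) + 1)) \<and>
     (\<forall>G :: 'b mat. is_generator_matrix G m (n - k) (m - (n - k) + 1) \<longrightarrow>
        (let S = rows (transpose_mat G * map_mat phi H) in
          is_test_set phi n C S (real (n - k - 1) / real m) \<and>
          real (n - k - 1) / real m \<le> p \<and>
          is_test_set phi n C S p))"
proof -
  define r where "r = n - k"
  define Q where "Q = card (UNIV :: 'a set) ^ u"
  define m where "m = nat \<lceil>real (r - 1) / p\<rceil>"
  have r2: "2 \<le> r" using nk unfolding r_def by simp
  have rr: "real (r - 1) = real r - 1" using r2 by simp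
  have cA: "2 \<le> card (UNIV :: 'a set)"
  proof -
    have "{0, 1} \<subseteq> (UNIV :: 'a set)" by simp
    then have "card {0, 1 :: 'a} \<le> card (UNIV :: 'a set)" by (rule card_mono[OF finite_UNIV])
    then show ?thesis by simp
  qed
  have Q2: "2 \<le> Q"
  proof -
    have "card (UNIV :: 'a set) ^ 1 \<le> card (UNIV :: 'a set) ^ u"
      by (rule power_increasing) (use u cA in auto)
    then show ?thesis unfolding Q_def using cA by simp
  qed
  have rQ: "real Q \<ge> 2" using Q2 by linarith
  have "real (r - 1) / (real Q - 1) < p" using p_lo unfolding r_def Q_def .
  then have plo: "(real r - 1) / (real Q - 1) < p" using rr by simp
  have pos1: "real Q - 1 > 0" using rQ by simp
  have r1: "real r - 1 \<ge> 1" using r2 by simp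
  have p0: "p > 0"
  proof -
    have "(real r - 1) / (real Q - 1) > 0" using pos1 r1 by simp
    then show ?thesis using plo by simp
  qed
  define x where "x = (real r - 1) / p"
  have x_lo: "x > real r - 1"
  proof -
    have "(real r - 1) * p < (real r - 1) * 1" using p_hi r1 by (intro mult_strict_left_mono) auto
    then show ?thesis unfolding x_def using p0 by (simp add: field_simps)
  qed
  have x_hi: "x < real Q - 1"
  proof -
    have "real r - 1 < p * (real Q - 1)" using plo pos1 by (simp add: field_simps)
    then show ?thesis unfolding x_def using p0 by (simp add: field_simps)
  qed
  have mx: "m = nat \<lceil>x\<rceil>" unfolding m_def x_def rr ..
  have cx: "x \<le> of_int \<lceil>x\<rceil>" by (rule le_of_int_ceiling)
  have c0: "\<lceil>x\<rceil> \<ge> 0"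
  proof -
    have "(0::real) < of_int \<lceil>x\<rceil>" using cx x_lo r1 by linarith
    then show ?thesis by simp
  qed
  have rm: "real m = of_int \<lceil>x\<rceil>" unfolding mx using c0 by simp
  have m_ge: "r \<le> m"
  proof -
    have "of_int \<lceil>x\<rceil> > real r - 1" using cx x_lo by linarith
    then have "\<lceil>x\<rceil> > int r - 1" by linarith
    then show ?thesis unfolding mx by linarith
  qed
  have m_le: "m \<le> Q - 1"
  proof -
    have "\<lceil>x\<rceil> \<le> int Q - 1"
      by (rule ceiling_le) (use x_hi Q2 in auto)
    then show ?thesis unfolding mx using Q2 by linarith
  qed
  have mpos: "0 < m" using m_ge r2 by simp
  have xm: "x \<le> real m" using cx rm by simp
  have prob_le: "(real r - 1) / real m \<le> p"
  proof -
    have "real r - 1 \<le> p * real m" using xm p0 unfolding x_def by (simp add: field_simps)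
    then show ?thesis using mpos by (simp add: field_simps)
  qed
  have exG: "\<exists>G :: 'b mat. is_generator_matrix G m r (m - r + 1)"
  proof -
    obtain xs :: "'b list" where xs: "distinct xs" "set xs = UNIV"
      using finite_distinct_list[OF finite_UNIV] by blast
    have lxs: "length xs = Q" using distinct_card[OF xs(1)] xs(2) card_ext unfolding Q_def by simp
    define a where "a i = xs ! i" for i
    have inj: "inj_on a {..<m}"
    proof (rule inj_onI)
      fix i j assume ij: "i \<in> {..<m}" "j \<in> {..<m}" "a i = a j"
      have "i < length xs" "j < length xs" using ij(1,2) lxs m_le Q2 by auto
      then show "i = j" using ij(3) nth_eq_iff_index_eq[OF xs(1)] unfolding a_def by blast
    qed
    have r1': "1 \<le> r" using r2 by simp
    have "is_generator_matrix (mat r m (\<lambda>(j,i). a i ^ j)) m r (m - r + 1)"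
      unfolding is_generator_matrix_def
      using RS_rank[OF inj r1' m_ge] RS_min_dist[OF inj r1' m_ge] by simp
    then show ?thesis by blast
  qed
  have tests: "is_test_set phi n (code_of_parity_check H) (rows (transpose_mat G * map_mat phi H)) ((real r - 1) / real m)
     \<and> is_test_set phi n (code_of_parity_check H) (rows (transpose_mat G * map_mat phi H)) p"
    if G: "is_generator_matrix G m r (m - r + 1)" for G :: "'b mat"
  proof -
    have Gc: "G \<in> carrier_mat r m" and rk: "vec_space.rank r G = r"
      and md: "min_distance m (code_of_generator G) = m - r + 1"
      using G unfolding is_generator_matrix_def by auto
    have Hr: "H \<in> carrier_mat r n" using H unfolding r_def .
    have d_eq: "real (m - r + 1) = real m - (real r - 1)" using m_ge r2 by simp
    have e1: "(1 - (real r - 1) / real m) * real m \<le> real (m - r + 1)"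
      using mpos d_eq by (simp add: field_simps)
    have e2: "(1 - p) * real m \<le> real (m - r + 1)"
      using prob_le mpos d_eq by (simp add: field_simps)
    show ?thesis
      using test_set_lemma[OF ext Hr Gc rk md mpos e1] test_set_lemma[OF ext Hr Gc rk md mpos e2] by simp
  qed
  show ?thesis
    unfolding Let_def
    unfolding r_def[symmetric]
    unfolding Q_def[symmetric] m_def[symmetric]
    apply (intro conjI allI impI)
         apply (rule m_ge)
        apply (rule m_le)
       apply (rule exG)
      apply (simp only: rr, erule tests[THEN conjunct1])
     apply (simp only: rr, rule prob_le)
    apply (erule tests[THEN conjunct2])
    done
qed

end
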